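(* Let $n\geq 6$ be an integer. Then $\Delta_D(S_n)^*$ is connected if and only if neither $n$ nor $n-1$ is a prime.
   Context: $S_n$ is the symmetric group. The deep commuting graph $\Delta_D(G)$ has vertex set $G$, distinct vertices adjacent iff their preimages commute in a Schur cover $\tilde G$ of $G$ (a central extension $\{e\}\to M(G)\to\tilde G\to G\to\{e\}$ with kernel contained in $Z(\tilde G)\cap[\tilde G,\tilde G]$, of maximal order; $M(G)$ the Schur multiplier). A vertex is dominant if adjacent to every other vertex; the reduced graph $\Gamma^*$ is the subgraph induced by the non-dominant vertices. *)

theory Defs
  imports "HOL-Algebra.Algebra" "HOL-Computational_Algebra.Primes"
begin

definition group_center :: "('c, 'd) monoid_scheme \<Rightarrow> 'c set" where
  "group_center H = {z \<in> carrier H. \<forall>h \<in> carrier H. z \<otimes>\<^bsub>H\<^esub> h = h \<otimes>\<^bsub>H\<^esub> z}"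

definition stem_extension ::
  "('c, 'd) monoid_scheme \<Rightarrow> ('c \<Rightarrow> 'a) \<Rightarrow> ('a, 'b) monoid_scheme \<Rightarrow> bool" where
  "stem_extension H \<phi> G \<longleftrightarrow>
     group H \<and> group G \<and> \<phi> \<in> hom H G \<and> \<phi> ` carrier H = carrier G \<and>
     kernel H G \<phi> \<subseteq> group_center H \<inter> derived H (carrier H)"

text \<open>Every finite group is isomorphic to one with carrier in
  the type nat, so comparing against stem extensions with carrier in nat is
  comparing against all (finite) stem extensions.\<close>
definition schur_cover ::
  "('c, 'd) monoid_scheme \<Rightarrow> ('c \<Rightarrow> 'a) \<Rightarrow> ('a, 'b) monoid_scheme \<Rightarrow> bool" where
  "schur_cover H \<phi> G \<longleftrightarrow>
     stem_extension H \<phi> G \<and> finite (kernel H G \<phi>) \<and>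
     (\<forall>(K :: nat monoid) rho. stem_extension K rho G \<longrightarrow>
        finite (kernel K G rho) \<and> card (kernel K G rho) \<le> card (kernel H G \<phi>))"

definition deep_adj ::
  "('c, 'd) monoid_scheme \<Rightarrow> ('c \<Rightarrow> 'a) \<Rightarrow> ('a, 'b) monoid_scheme \<Rightarrow> 'a \<Rightarrow> 'a \<Rightarrow> bool" where
  "deep_adj H \<phi> G x y \<longleftrightarrow> x \<noteq> y \<and>
     (\<exists>a \<in> carrier H. \<exists>b \<in> carrier H. \<phi> a = x \<and> \<phi> b = y \<and>
        a \<otimes>\<^bsub>H\<^esub> b = b \<otimes>\<^bsub>H\<^esub> a)"

definition deep_dominant ::
  "('c, 'd) monoid_scheme \<Rightarrow> ('c \<Rightarrow> 'a) \<Rightarrow> ('a, 'b) monoid_scheme \<Rightarrow> 'a \<Rightarrow> bool" where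
  "deep_dominant H \<phi> G x \<longleftrightarrow> (\<forall>y \<in> carrier G. y \<noteq> x \<longrightarrow> deep_adj H \<phi> G x y)"

definition reduced_vertices ::
  "('c, 'd) monoid_scheme \<Rightarrow> ('c \<Rightarrow> 'a) \<Rightarrow> ('a, 'b) monoid_scheme \<Rightarrow> 'a set" where
  "reduced_vertices H \<phi> G = {x \<in> carrier G. \<not> deep_dominant H \<phi> G x}"

definition graph_connected_on :: "'a set \<Rightarrow> ('a \<Rightarrow> 'a \<Rightarrow> bool) \<Rightarrow> bool" where
  "graph_connected_on V E \<longleftrightarrow>
     (\<forall>u \<in> V. \<forall>v \<in> V. (u, v) \<in> {(a, b). a \<in> V \<and> b \<in> V \<and> E a b}\<^sup>*)"

end

theory Submission
  imports Defs
begin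


definition VV :: "nat \<Rightarrow> (nat \<Rightarrow> nat) set" where
  "VV n = {p. p permutes {1..n}} - {id}"

definition pe :: "(nat \<Rightarrow> nat) \<Rightarrow> (nat \<Rightarrow> nat) \<Rightarrow> bool" where
  "pe x y \<longleftrightarrow> x \<noteq> y \<and> (\<exists>k. y = x ^^ k \<or> x = y ^^ k)"

definition RR :: "nat \<Rightarrow> ((nat \<Rightarrow> nat) \<times> (nat \<Rightarrow> nat)) set" where
  "RR n = {(a, b). a \<in> VV n \<and> b \<in> VV n \<and> pe a b}"

definition conn :: "nat \<Rightarrow> (nat \<Rightarrow> nat) \<Rightarrow> (nat \<Rightarrow> nat) \<Rightarrow> bool" where
  "conn n x y \<longleftrightarrow> (x, y) \<in> (RR n)\<^sup>*"

lemma conn_refl: "conn n x x" by (simp add: conn_def)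

lemma conn_trans: "conn n x y \<Longrightarrow> conn n y z \<Longrightarrow> conn n x z"
  unfolding conn_def by (rule rtrancl_trans)

lemma RR_sym: "(x, y) \<in> RR n \<Longrightarrow> (y, x) \<in> RR n"
  unfolding RR_def pe_def by auto

lemma conn_sym: "conn n x y \<Longrightarrow> conn n y x"
  unfolding conn_def
proof (induction rule: rtrancl_induct)
  case base then show ?case by simp
next
  case (step y z)
  then show ?case using RR_sym by (meson converse_rtrancl_into_rtrancl)
qed

lemma permutes_funpow': "p permutes S \<Longrightarrow> p ^^ k permutes S"
  by (induction k) (auto simp: permutes_id permutes_compose)

lemma conn_pow:
  assumes "x \<in> VV n" "x ^^ k \<noteq> id"
  shows "conn n x (x ^^ k)"
proof (cases "x ^^ k = x")
  case True then show ?thesis by (simp add: conn_refl)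
next
  case False
  have "x ^^ k \<in> VV n" using assms permutes_funpow' unfolding VV_def by auto
  then have "(x, x ^^ k) \<in> RR n" using assms False unfolding RR_def pe_def by auto
  then show ?thesis unfolding conn_def by auto
qed

lemma funpow_comm_comp:
  assumes "x \<circ> y = y \<circ> x"
  shows "(x \<circ> y) ^^ k = x ^^ k \<circ> y ^^ k"
proof -
  have c: "x ^^ k \<circ> y = y \<circ> x ^^ k" for k
  proof (induction k)
    case 0 then show ?case by simp
  next
    case (Suc k)
    have "x ^^ Suc k \<circ> y = x \<circ> (x ^^ k \<circ> y)" by (simp add: o_assoc)
    also have "\<dots> = (x \<circ> y) \<circ> x ^^ k" using Suc by (metis o_assoc)
    also have "\<dots> = y \<circ> x ^^ Suc k" using assms by (simp add: o_assoc)
    finally show ?case .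
  qed
  show ?thesis
  proof (induction k)
    case 0 then show ?case by simp
  next
    case (Suc k)
    have "(x \<circ> y) ^^ Suc k = (x \<circ> y) \<circ> (x ^^ k \<circ> y ^^ k)" using Suc by (metis funpow.simps(2))
    also have "\<dots> = x \<circ> (y \<circ> x ^^ k) \<circ> y ^^ k" by (simp add: o_assoc)
    also have "\<dots> = x \<circ> (x ^^ k \<circ> y) \<circ> y ^^ k" using c by simp
    also have "\<dots> = x ^^ Suc k \<circ> y ^^ Suc k" by (simp add: o_assoc funpow_Suc_right)
    finally show ?case .
  qed
qed

lemma funpow_mod_id: "f ^^ m = id \<Longrightarrow> f ^^ k = f ^^ (k mod m)"
  by (rule ext) (simp add: funpow_mod_eq)

lemma funpow_id_dvd: "f ^^ m = id \<Longrightarrow> m dvd k \<Longrightarrow> f ^^ k = id"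
  by (metis dvd_def funpow_mult id_funpow mult.commute)

lemma solve_mod:
  assumes "coprime a (b::nat)"
  shows "\<exists>u. (a * u) mod b = Suc 0 mod b"
proof (cases "a = 0")
  case True
  then have "b = 1" using assms by simp
  then show ?thesis by simp
next
  case False
  obtain x y where "a * x = b * y + gcd a b" using bezout_nat[OF False] by blast
  then have "a * x = 1 + b * y" using assms by simp
  then have "(a * x) mod b = Suc 0 mod b" by (metis One_nat_def mod_mult_self2)
  then show ?thesis by blast
qed

lemma funpow_cong1:
  assumes "f ^^ b = id" "k mod b = Suc 0 mod b"
  shows "f ^^ k = f"
proof (cases "b = 1")
  case True
  then have "f = id" using assms by simp
  then show ?thesis by simp
next
  case False
  show ?thesis
  proof (cases "b = 0")
    case True then show ?thesis using assms by simp
  next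
    case False
    with \<open>b \<noteq> 1\<close> have "Suc 0 mod b = Suc 0" by simp
    then have "k mod b = Suc 0" using assms(2) by simp
    then show ?thesis using funpow_mod_id[OF assms(1), of k] by simp
  qed
qed

lemma conn_coprime:
  assumes "x \<in> VV n" "y \<in> VV n" "x \<circ> y = y \<circ> x" "x ^^ a = id" "y ^^ b = id"
    "coprime a b"
  shows "conn n x y"
proof -
  obtain u where u: "(a * u) mod b = Suc 0 mod b" using solve_mod assms(6) by blast
  obtain v where v: "(b * v) mod a = Suc 0 mod a" using solve_mod assms(6)
    by (metis coprime_commute)
  have yid: "y ^^ (a * u) = y" by (rule funpow_cong1[OF assms(5) u])
  have xid: "x ^^ (b * v) = x" by (rule funpow_cong1[OF assms(4) v])
  have xau: "x ^^ (a * u) = id" using funpow_id_dvd[OF assms(4)] by simp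
  have ybv: "y ^^ (b * v) = id" using funpow_id_dvd[OF assms(5)] by simp
  have z1: "(x \<circ> y) ^^ (a * u) = y"
    using funpow_comm_comp[OF assms(3)] yid xau by simp
  have z2: "(x \<circ> y) ^^ (b * v) = x"
    using funpow_comm_comp[OF assms(3)] xid ybv by simp
  have zid: "x \<circ> y \<noteq> id"
  proof
    assume "x \<circ> y = id"
    then have "(x \<circ> y) ^^ (a * u) = id" by simp
    then show False using z1 assms(2) unfolding VV_def by simp
  qed
  have zV: "x \<circ> y \<in> VV n" using assms(1,2) zid permutes_compose unfolding VV_def by auto
  have "conn n (x \<circ> y) y" using conn_pow[OF zV, of "a * u"] z1 assms(2) unfolding VV_def by auto
  moreover have "conn n (x \<circ> y) x" using conn_pow[OF zV, of "b * v"] z2 assms(1) unfolding VV_def by auto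
  ultimately show ?thesis using conn_sym conn_trans by blast
qed


lemma permutes_of_order:
  assumes "f ^^ m = id" "m > 0" "\<And>x. x \<notin> S \<Longrightarrow> f x = x"
  shows "f permutes S"
proof -
  obtain k where m: "m = Suc k" using assms(2) by (cases m) auto
  have e1: "f ((f ^^ k) y) = y" for y
    using assms(1) m by (metis funpow.simps(2) comp_apply id_apply)
  have e2: "(f ^^ k) (f y) = y" for y
    using assms(1) m by (metis comp_apply funpow_Suc_right id_apply)
  show ?thesis unfolding permutes_def
  proof (intro conjI allI impI)
    fix x assume "x \<notin> S" then show "f x = x" using assms(3) by simp
  next
    fix y show "\<exists>!x. f x = y"
      by (metis e1 e2)
  qed
qed

definition TT :: "nat \<Rightarrow> (nat \<Rightarrow> nat) set" where
  "TT n = {transpose a b | a b. a \<in> {1..n} \<and> b \<in> {1..n} \<and> a \<noteq> b}"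

lemma comm_transpose:
  assumes "inj y" "y a = a" "y b = b"
  shows "y \<circ> transpose a b = transpose a b \<circ> y"
proof
  fix w
  show "(y \<circ> transpose a b) w = (transpose a b \<circ> y) w"
  proof (cases "w = a \<or> w = b")
    case True then show ?thesis using assms by (auto simp: transpose_def)
  next
    case False
    then have "y w \<noteq> a" "y w \<noteq> b" using assms by (metis injD)+
    then show ?thesis using False by simp
  qed
qed

lemma transpose_sq: "transpose a b ^^ 2 = id"
  by (rule ext) (simp add: numeral_2_eq_2 transpose_def)

lemma transpose_VV: "a \<in> {1..n} \<Longrightarrow> b \<in> {1..n} \<Longrightarrow> a \<noteq> b \<Longrightarrow> transpose a b \<in> VV n"
  unfolding VV_def by (metis (mono_tags, lifting) Diff_iff id_apply mem_Collect_eq permutes_swap_id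
      singletonD transpose_apply_first)

lemma VV_inj: "y \<in> VV n \<Longrightarrow> inj y"
  unfolding VV_def using permutes_inj by auto

lemma conn_transp:
  assumes "y \<in> VV n" "y ^^ p = id" "odd p" "a \<in> {1..n}" "b \<in> {1..n}" "a \<noteq> b"
    "y a = a" "y b = b"
  shows "conn n y (transpose a b)"
  by (rule conn_coprime[OF assms(1) transpose_VV[OF assms(4-6)]
        comm_transpose[OF VV_inj[OF assms(1)] assms(7,8)] assms(2) transpose_sq])
     (simp add: assms(3))

lemma transp_TT: "a \<in> {1..n} \<Longrightarrow> b \<in> {1..n} \<Longrightarrow> a \<noteq> b \<Longrightarrow> transpose a b \<in> TT n"
  unfolding TT_def by blast

lemma avoid:
  assumes "finite F" "card F < n"
  shows "\<exists>x\<in>{1..n}. x \<notin> F"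
proof (rule ccontr)
  assume "\<not> ?thesis"
  then have "{1..n} \<subseteq> F" by auto
  then have "n \<le> card F" using card_mono[OF assms(1)] by (metis card_atLeastAtMost diff_Suc_1)
  then show False using assms by simp
qed

lemma avoid_in:
  assumes "finite F" "finite S" "card F < card S"
  shows "\<exists>x\<in>S. x \<notin> F"
proof (rule ccontr)
  assume "\<not> ?thesis"
  then have "S \<subseteq> F" by auto
  then have "card S \<le> card F" using card_mono[OF assms(1)] by blast
  then show False using assms by simp
qed

definition cyc3 :: "nat \<Rightarrow> nat \<Rightarrow> nat \<Rightarrow> nat \<Rightarrow> nat" where
  "cyc3 a b c = transpose a b \<circ> transpose b c"

lemma cyc3_VV:
  assumes "a \<in> {1..n}" "b \<in> {1..n}" "c \<in> {1..n}" "a \<noteq> b" "b \<noteq> c" "a \<noteq> c"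
  shows "cyc3 a b c \<in> VV n"
proof -
  have "cyc3 a b c permutes {1..n}" unfolding cyc3_def
    using assms by (simp add: permutes_swap_id permutes_compose)
  moreover have "cyc3 a b c a = b" using assms by (simp add: cyc3_def)
  ultimately show ?thesis unfolding VV_def using assms by auto
qed

lemma cyc3_cube:
  assumes "a \<noteq> b" "b \<noteq> c" "a \<noteq> c"
  shows "cyc3 a b c ^^ 3 = id"
proof
  fix w
  have e: "(cyc3 a b c ^^ 3) w = cyc3 a b c (cyc3 a b c (cyc3 a b c w))"
    by (simp add: numeral_3_eq_3)
  show "(cyc3 a b c ^^ 3) w = id w"
    unfolding e using assms by (cases "w = a"; cases "w = b"; cases "w = c") (auto simp: cyc3_def)
qed

lemma cyc3_other: "w \<noteq> a \<Longrightarrow> w \<noteq> b \<Longrightarrow> w \<noteq> c \<Longrightarrow> cyc3 a b c w = w"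
  by (simp add: cyc3_def)

lemma card2: "card {a, b :: nat} < 3"
proof -
  have "card (set [a,b]) \<le> length [a,b]" by (rule card_length)
  then show ?thesis by (simp only: list.set length_Cons list.size)
qed

lemma card3: "card {a, b, c :: nat} < 4"
proof -
  have "card (set [a,b,c]) \<le> length [a,b,c]" by (rule card_length)
  then show ?thesis by (simp only: list.set length_Cons list.size)
qed

lemma card4: "card {a, b, c, d :: nat} < 5"
proof -
  have "card (set [a,b,c,d]) \<le> length [a,b,c,d]" by (rule card_length)
  then show ?thesis by (simp only: list.set length_Cons list.size)
qed

lemma card5: "card {a, b, c, d, e :: nat} < 6"
proof -
  have "card (set [a,b,c,d,e]) \<le> length [a,b,c,d,e]" by (rule card_length)
  then show ?thesis by (simp only: list.set length_Cons list.size)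
qed

lemma card6: "card {a, b, c, d, e, f :: nat} < 7"
proof -
  have "card (set [a,b,c,d,e,f]) \<le> length [a,b,c,d,e,f]" by (rule card_length)
  then show ?thesis by (simp only: list.set length_Cons list.size)
qed

lemma card7: "card {a, b, c, d, e, f, g :: nat} < 8"
proof -
  have "card (set [a,b,c,d,e,f,g]) \<le> length [a,b,c,d,e,f,g]" by (rule card_length)
  then show ?thesis by (simp only: list.set length_Cons list.size)
qed

lemma card8: "card {a, b, c, d, e, f, g, h :: nat} < 9"
proof -
  have "card (set [a,b,c,d,e,f,g,h]) \<le> length [a,b,c,d,e,f,g,h]" by (rule card_length)
  then show ?thesis by (simp only: list.set length_Cons list.size)
qed


lemma cyc3_conn_transp:
  assumes "a \<in> {1..n}" "b \<in> {1..n}" "c \<in> {1..n}" "a \<noteq> b" "b \<noteq> c" "a \<noteq> c"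
    "d \<in> {1..n}" "e \<in> {1..n}" "d \<noteq> e" "d \<notin> {a,b,c}" "e \<notin> {a,b,c}"
  shows "conn n (cyc3 a b c) (transpose d e)"
  by (rule conn_transp[OF cyc3_VV[OF assms(1-6)] cyc3_cube[OF assms(4-6)]])
     (use assms in \<open>auto simp: cyc3_other\<close>)

lemma transp_conn:
  assumes "n \<ge> 9" "t1 \<in> TT n" "t2 \<in> TT n"
  shows "conn n t1 t2"
proof -
  obtain a b where ab: "t1 = transpose a b" "a \<in> {1..n}" "b \<in> {1..n}" "a \<noteq> b"
    using assms(2) unfolding TT_def by blast
  obtain c d where cd: "t2 = transpose c d" "c \<in> {1..n}" "d \<in> {1..n}" "c \<noteq> d"
    using assms(3) unfolding TT_def by blast
  obtain e where e: "e \<in> {1..n}" "e \<notin> {a,b,c,d}"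
    using avoid[of "{a,b,c,d}" n] card4[of a b c d] assms(1) by auto
  obtain f where f: "f \<in> {1..n}" "f \<notin> {a,b,c,d,e}"
    using avoid[of "{a,b,c,d,e}" n] card5[of a b c d e] assms(1) by auto
  obtain g where g: "g \<in> {1..n}" "g \<notin> {a,b,c,d,e,f}"
    using avoid[of "{a,b,c,d,e,f}" n] card6[of a b c d e f] assms(1) by auto
  have "conn n (cyc3 e f g) t1" unfolding ab(1)
    by (rule cyc3_conn_transp) (use ab e f g in auto)
  moreover have "conn n (cyc3 e f g) t2" unfolding cd(1)
    by (rule cyc3_conn_transp) (use cd e f g in auto)
  ultimately show ?thesis using conn_sym conn_trans by blast
qed


lemma prime_power:
  assumes "x \<in> VV n"
  shows "\<exists>p y. Factorial_Ring.prime p \<and> y \<in> VV n \<and> y ^^ p = id \<and> conn n x y"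
proof -
  have perm: "x permutes {1..n}" and xid: "x \<noteq> id" using assms unfolding VV_def by auto
  have "permutation x" using perm permutation_permutes by blast
  then obtain m where m: "x ^^ m = id" "m > 0" using permutation_is_nilpotent by blast
  define m0 where "m0 = (LEAST m. 0 < m \<and> x ^^ m = id)"
  have m0: "0 < m0 \<and> x ^^ m0 = id" unfolding m0_def by (rule LeastI[of _ m]) (use m in auto)
  have m0l: "\<And>k. k < m0 \<Longrightarrow> \<not> (0 < k \<and> x ^^ k = id)"
    unfolding m0_def by (rule not_less_Least)
  have "m0 \<noteq> 1" using m0 xid by auto
  then obtain p where p: "Factorial_Ring.prime p" "p dvd m0" using prime_factor_nat by blast
  then obtain q where q: "m0 = p * q" by (auto elim: dvdE)
  have qpos: "q > 0" using q m0 by (cases q) auto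
  have "q < m0" using q p qpos prime_gt_1_nat by simp
  then have xq: "x ^^ q \<noteq> id" using m0l qpos by blast
  have "(x ^^ q) ^^ p = id" using m0 q by (simp add: funpow_mult mult.commute)
  moreover have "x ^^ q \<in> VV n" using perm xq permutes_funpow' unfolding VV_def by auto
  moreover have "conn n x (x ^^ q)" by (rule conn_pow[OF assms xq])
  ultimately show ?thesis using p by blast
qed

lemma invol_inv:
  assumes "y ^^ 2 = id"
  shows "y (y w) = w"
proof -
  have "(y ^^ 2) w = w" using assms by simp
  then show ?thesis by (simp add: numeral_2_eq_2)
qed

lemma comm_cyc3:
  assumes "inj y" "y a = a" "y b = b" "y c = c"
  shows "y \<circ> cyc3 a b c = cyc3 a b c \<circ> y"
proof -
  have 1: "y \<circ> transpose a b = transpose a b \<circ> y" by (rule comm_transpose) (use assms in auto)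
  have 2: "y \<circ> transpose b c = transpose b c \<circ> y" by (rule comm_transpose) (use assms in auto)
  show ?thesis unfolding cyc3_def using 1 2 by (metis o_assoc)
qed

lemma invol_fix3:
  assumes "n \<ge> 9" "y \<in> VV n" "y ^^ 2 = id" "a \<in> {1..n}" "b \<in> {1..n}" "c \<in> {1..n}"
    "a \<noteq> b" "b \<noteq> c" "a \<noteq> c" "y a = a" "y b = b" "y c = c"
  shows "\<exists>t\<in>TT n. conn n y t"
proof -
  have "conn n y (cyc3 a b c)"
    by (rule conn_coprime[OF assms(2) cyc3_VV[OF assms(4-9)]
          comm_cyc3[OF VV_inj[OF assms(2)] assms(10-12)] assms(3) cyc3_cube[OF assms(7-9)]])
       (simp only: coprime_left_2_iff_odd, simp)
  moreover
  obtain d where d: "d \<in> {1..n}" "d \<notin> {a,b,c}"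
    using avoid[of "{a,b,c}" n] card3[of a b c] assms(1) by auto
  obtain e where e: "e \<in> {1..n}" "e \<notin> {a,b,c,d}"
    using avoid[of "{a,b,c,d}" n] card4[of a b c d] assms(1) by auto
  have "conn n (cyc3 a b c) (transpose d e)"
    by (rule cyc3_conn_transp) (use assms d e in auto)
  moreover have "transpose d e \<in> TT n" by (rule transp_TT) (use d e in auto)
  ultimately show ?thesis using conn_trans by blast
qed

lemma pick3:
  assumes "finite (S :: nat set)" "card S \<ge> 3"
  shows "\<exists>a b c. a \<in> S \<and> b \<in> S \<and> c \<in> S \<and> a \<noteq> b \<and> b \<noteq> c \<and> a \<noteq> c"
proof -
  obtain a where a: "a \<in> S" using avoid_in[of "{}" S] assms by auto
  obtain b where b: "b \<in> S" "b \<notin> {a}" using avoid_in[of "{a}" S] assms by auto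
  obtain c where c: "c \<in> S" "c \<notin> {a,b}" using avoid_in[of "{a,b}" S] card2[of a b] assms by auto
  show ?thesis using a b c by blast
qed

lemma invol_TT:
  assumes "n \<ge> 9" "y \<in> VV n" "y ^^ 2 = id"
  shows "\<exists>t\<in>TT n. conn n y t"
proof (cases "\<exists>a b c. a \<in> {1..n} \<and> b \<in> {1..n} \<and> c \<in> {1..n} \<and> a \<noteq> b \<and> b \<noteq> c \<and> a \<noteq> c
    \<and> y a = a \<and> y b = b \<and> y c = c")
  case True
  then show ?thesis using invol_fix3[OF assms] by blast
next
  case False
  have perm: "y permutes {1..n}" using assms unfolding VV_def by auto
  have inv: "\<And>w. y (y w) = w" using invol_inv[OF assms(3)] .
  have yin: "\<And>w. w \<in> {1..n} \<Longrightarrow> y w \<in> {1..n}" using permutes_in_image[OF perm] by metis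
  have pick: "\<exists>w\<in>{1..n}. w \<notin> F \<and> y w \<noteq> w" if "finite F" "card F < 6" for F
  proof (rule ccontr)
    assume "\<not> ?thesis"
    then have fx: "\<And>w. w \<in> {1..n} - F \<Longrightarrow> y w = w" by auto
    have "card {1..n} - card F \<le> card ({1..n} - F)" by (rule diff_card_le_card_Diff) (use that in auto)
    then have "card ({1..n} - F) \<ge> 3" using that assms(1) by simp
    then obtain a b c where "a \<in> {1..n} - F" "b \<in> {1..n} - F" "c \<in> {1..n} - F" "a \<noteq> b" "b \<noteq> c" "a \<noteq> c"
      using pick3[of "{1..n} - F"] by auto
    then show False using False fx by blast
  qed
  obtain a1 where a1: "a1 \<in> {1..n}" "y a1 \<noteq> a1" using pick[of "{}"] by auto
  define b1 where "b1 = y a1"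
  obtain a2 where a2: "a2 \<in> {1..n}" "a2 \<notin> {a1, b1}" "y a2 \<noteq> a2"
    using pick[of "{a1, b1}"] card2[of a1 b1] by auto
  define b2 where "b2 = y a2"
  obtain a3 where a3: "a3 \<in> {1..n}" "a3 \<notin> {a1, b1, a2, b2}" "y a3 \<noteq> a3"
    using pick[of "{a1, b1, a2, b2}"] card4[of a1 b1 a2 b2] by auto
  define b3 where "b3 = y a3"
  have yv: "y a1 = b1" "y b1 = a1" "y a2 = b2" "y b2 = a2" "y a3 = b3" "y b3 = a3"
    using inv b1_def b2_def b3_def by auto
  have bin: "b1 \<in> {1..n}" "b2 \<in> {1..n}" "b3 \<in> {1..n}" using yin a1 a2 a3 b1_def b2_def b3_def by auto
  have d1: "a1 \<noteq> b1" using a1(2) yv(1) by auto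
  have d2: "a1 \<noteq> a2" "b1 \<noteq> a2" using a2(2) by auto
  have d3: "a1 \<noteq> b2"
  proof
    assume "a1 = b2" then have "y a1 = y b2" by simp
    then show False using yv(1,4) d2 by simp
  qed
  have d4: "b1 \<noteq> b2"
  proof
    assume "b1 = b2" then have "y b1 = y b2" by simp
    then show False using yv(2,4) d2 by simp
  qed
  have d5: "a2 \<noteq> b2" using a2(3) yv(3) by auto
  have d6: "a1 \<noteq> a3" "b1 \<noteq> a3" "a2 \<noteq> a3" "b2 \<noteq> a3" using a3(2) by auto
  have d7: "a3 \<noteq> b3" using a3(3) yv(5) by auto
  have d8: "a1 \<noteq> b3"
  proof
    assume "a1 = b3" then have "y a1 = y b3" by simp
    then show False using yv(1,6) d6 by simp
  qed
  have d9: "b1 \<noteq> b3"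
  proof
    assume "b1 = b3" then have "y b1 = y b3" by simp
    then show False using yv(2,6) d6 by simp
  qed
  have d10: "a2 \<noteq> b3"
  proof
    assume "a2 = b3" then have "y a2 = y b3" by simp
    then show False using yv(3,6) d6 by simp
  qed
  have d11: "b2 \<noteq> b3"
  proof
    assume "b2 = b3" then have "y b2 = y b3" by simp
    then show False using yv(4,6) d6 by simp
  qed
  note dist = d1 d2 d3 d4 d5 d6 d7 d8 d9 d10 d11
  define six where "six = {a1, b1, a2, b2, a3, b3}"
  have six_sub: "six \<subseteq> {1..n}" using a1 a2 a3 bin six_def by auto
  have yout: "w \<notin> six \<Longrightarrow> y w \<notin> six" for w
  proof
    assume w: "w \<notin> six" and yw: "y w \<in> six"
    have "w = y (y w)" using inv by simp
    then have "w \<in> y ` six" using yw by blast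
    moreover have "y ` six = six" unfolding six_def using yv by auto
    ultimately show False using w by simp
  qed
  define z where "z = (\<lambda>w. if w = a1 then a2 else if w = a2 then a3 else if w = a3 then b1
     else if w = b1 then b2 else if w = b2 then b3 else if w = b3 then a1 else y w)"
  have zout: "w \<notin> six \<Longrightarrow> z w = y w" for w unfolding z_def six_def by auto
  have zv: "z a1 = a2" "z a2 = a3" "z a3 = b1" "z b1 = b2" "z b2 = b3" "z b3 = a1"
    unfolding z_def using dist by auto
  have z3: "z ^^ 3 = y"
  proof
    fix w
    have e: "(z ^^ 3) w = z (z (z w))" by (simp add: numeral_3_eq_3)
    show "(z ^^ 3) w = y w"
    proof (cases "w \<in> six")
      case True
      then show ?thesis unfolding e six_def using zv yv by auto
    next
      case False
      then show ?thesis unfolding e using zout yout inv by simp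
    qed
  qed
  have z6: "z ^^ 6 = id"
  proof -
    have "z ^^ 6 = (z ^^ 3) ^^ 2" by (simp add: funpow_mult)
    then show ?thesis using z3 assms(3) by simp
  qed
  have zperm: "z permutes {1..n}"
  proof (rule permutes_of_order[OF z6])
    fix w assume "w \<notin> {1..n}"
    then have "w \<notin> six" using six_sub by auto
    then show "z w = w" using zout perm \<open>w \<notin> {1..n}\<close> by (simp add: permutes_def)
  qed simp
  have "z \<noteq> id"
  proof
    assume "z = id" then have "z a1 = a1" by simp
    then show False using zv(1) d2 by simp
  qed
  then have zV: "z \<in> VV n" using zperm unfolding VV_def by auto
  have c1: "conn n z y" using conn_pow[OF zV, of 3] z3 assms(2) unfolding VV_def by auto
  have z2ne: "z ^^ 2 \<noteq> id"
  proof
    assume "z ^^ 2 = id"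
    then have "(z ^^ 2) a1 = a1" by simp
    then show False using zv dist by (simp add: numeral_2_eq_2)
  qed
  have c2: "conn n z (z ^^ 2)" by (rule conn_pow[OF zV z2ne])
  have z2V: "z ^^ 2 \<in> VV n" using zperm z2ne permutes_funpow' unfolding VV_def by auto
  have z23: "(z ^^ 2) ^^ 3 = id" using z6 by (simp add: funpow_mult)
  have z2fix: "w \<notin> six \<Longrightarrow> (z ^^ 2) w = w" for w
    using zout yout inv by (simp add: numeral_2_eq_2)
  have c6: "card six < 7" unfolding six_def by (rule card6)
  have fin6: "finite six" unfolding six_def by simp
  have "card six < n" using c6 assms(1) by linarith
  then obtain d where d: "d \<in> {1..n}" "d \<notin> six"
    using avoid[OF fin6] by blast
  have "card (insert d six) \<le> Suc (card six)" by (simp add: card_insert_if fin6)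
  then have "card (insert d six) < n" using c6 assms(1) by linarith
  then obtain e where e: "e \<in> {1..n}" "e \<notin> insert d six"
    using avoid[of "insert d six" n] fin6 by blast
  have "conn n (z ^^ 2) (transpose d e)"
    by (rule conn_transp[OF z2V z23]) (use d e z2fix in auto)
  moreover have "transpose d e \<in> TT n" by (rule transp_TT) (use d e in auto)
  ultimately show ?thesis using c1 c2 conn_sym conn_trans by blast
qed



lemma orbit_fix:
  assumes "y ^^ p = id" "Factorial_Ring.prime p" "(y ^^ d) x = x" "0 < d" "d < p"
  shows "y x = x"
proof -
  have "\<not> p dvd d" using assms(4,5) by (auto dest: dvd_imp_le)
  then have "coprime p d" using prime_imp_coprime[OF assms(2)] by blast
  then have "coprime d p" by (simp add: coprime_commute)
  then obtain u where u: "(d * u) mod p = Suc 0 mod p" using solve_mod by blast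
  have p1: "p > 1" using assms(2) prime_gt_1_nat by blast
  have "((y ^^ d) ^^ u) x = x" by (induction u) (simp_all add: assms(3))
  then have "(y ^^ (d * u)) x = x" by (simp add: funpow_mult)
  moreover have "y ^^ (d * u) = y ^^ ((d * u) mod p)" by (rule funpow_mod_id[OF assms(1)])
  ultimately show ?thesis using u p1 by simp
qed

lemma orbit_inj_lt:
  assumes "y ^^ p = id" "Factorial_Ring.prime p" "y x \<noteq> x" "i < j" "j < p"
    "(y ^^ i) x = (y ^^ j) x"
  shows False
proof -
  have "(y ^^ (p - i)) ((y ^^ i) x) = (y ^^ (p - i + i)) x" by (simp add: funpow_add)
  also have "\<dots> = x" using assms(1,4,5) by simp
  finally have 1: "(y ^^ (p - i)) ((y ^^ i) x) = x" .
  have eq: "p - i + j = (j - i) + p" using assms(4,5) by arith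
  have "(y ^^ (p - i)) ((y ^^ j) x) = (y ^^ (p - i + j)) x" by (simp add: funpow_add)
  also have "\<dots> = (y ^^ ((j - i) + p)) x" by (simp only: eq)
  also have "\<dots> = (y ^^ (j - i)) x" using assms(1) by (simp add: funpow_add)
  finally have 2: "(y ^^ (p - i)) ((y ^^ j) x) = (y ^^ (j - i)) x" .
  have "(y ^^ (j - i)) x = x" using 1 2 assms(6) by simp
  then have "y x = x" by (rule orbit_fix[OF assms(1,2)]) (use assms(4,5) in auto)
  then show False using assms(3) by simp
qed

lemma orbit_inj:
  assumes "y ^^ p = id" "Factorial_Ring.prime p" "y x \<noteq> x" "i < p" "j < p"
    "(y ^^ i) x = (y ^^ j) x"
  shows "i = j"
proof (rule ccontr)
  assume "i \<noteq> j"
  then consider "i < j" | "j < i" by linarith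
  then show False
  proof cases
    case 1 then show False using orbit_inj_lt[OF assms(1-3) 1 assms(5,6)] by blast
  next
    case 2 then show False using orbit_inj_lt[OF assms(1-3) 2 assms(4)] assms(6) by simp
  qed
qed

definition orb :: "(nat \<Rightarrow> nat) \<Rightarrow> nat \<Rightarrow> nat \<Rightarrow> nat set" where
  "orb y p x = (\<lambda>i. (y ^^ i) x) ` {..<p}"

lemma mem_orb:
  assumes "y ^^ p = id" "p > 0"
  shows "(y ^^ k) x \<in> orb y p x"
proof -
  have "(y ^^ k) x = (y ^^ (k mod p)) x" using funpow_mod_id[OF assms(1), of k] by simp
  then show ?thesis unfolding orb_def using assms(2) by auto
qed

lemma orb_closed:
  assumes "y ^^ p = id" "p > 0" "w \<in> orb y p x"
  shows "(y ^^ k) w \<in> orb y p x"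
proof -
  obtain i where "w = (y ^^ i) x" using assms(3) unfolding orb_def by auto
  then have "(y ^^ k) w = (y ^^ (k + i)) x" by (simp add: funpow_add)
  then show ?thesis using mem_orb[OF assms(1,2)] by simp
qed

lemma orb_back:
  assumes "y ^^ p = id" "p > 0" "y w \<in> orb y p x"
  shows "w \<in> orb y p x"
proof -
  obtain q where q: "p = Suc q" using assms(2) by (cases p) auto
  have "(y ^^ q) (y w) = (y ^^ p) w" unfolding q by (simp only: funpow_Suc_right comp_apply)
  then have "w = (y ^^ q) (y w)" using assms(1) by simp
  then show ?thesis using orb_closed[OF assms] by metis
qed

lemma sel_mod:
  assumes "y ^^ p = id" "Factorial_Ring.prime p" "y x \<noteq> x"
  shows "(SOME k. k < p \<and> (y ^^ k) x = (y ^^ i) x) = i mod p"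
proof -
  have p0: "p > 0" using assms(2) prime_gt_0_nat by blast
  have e: "(y ^^ i) x = (y ^^ (i mod p)) x" using funpow_mod_id[OF assms(1), of i] by simp
  show ?thesis
  proof (rule someI2[of _ "i mod p"])
    show "i mod p < p \<and> (y ^^ (i mod p)) x = (y ^^ i) x" using p0 e by simp
  next
    fix k assume "k < p \<and> (y ^^ k) x = (y ^^ i) x"
    then show "k = i mod p" using orbit_inj[OF assms, of k "i mod p"] e p0 by simp
  qed
qed

lemma card_orb:
  assumes "y ^^ p = id" "Factorial_Ring.prime p" "y x \<noteq> x"
  shows "card (orb y p x) = p"
proof -
  have "inj_on (\<lambda>i. (y ^^ i) x) {..<p}"
    by (rule inj_onI) (use orbit_inj[OF assms] in auto)
  then show ?thesis unfolding orb_def by (simp add: card_image)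
qed

lemma orb_moved:
  assumes "y ^^ p = id" "p > 0" "y x \<noteq> x" "inj y" "w \<in> orb y p x"
  shows "y w \<noteq> w"
proof
  assume yw: "y w = w"
  obtain i where w: "w = (y ^^ i) x" using assms(5) unfolding orb_def by auto
  have "(y ^^ i) (y x) = y ((y ^^ i) x)" by (simp add: funpow_swap1)
  then have "(y ^^ i) (y x) = (y ^^ i) x" using yw w by simp
  moreover have "inj (y ^^ i)" using assms(4) by (rule inj_fn)
  ultimately show False using assms(3) by (meson injD)
qed


lemma oddp_TT:
  assumes "n \<ge> 9" "\<not> Factorial_Ring.prime n" "\<not> Factorial_Ring.prime (n - 1)"
    "y \<in> VV n" "y ^^ p = id" "Factorial_Ring.prime p" "p \<noteq> 2"
  shows "\<exists>t\<in>TT n. conn n y t"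
proof -
  have p0: "p > 0" using assms(6) prime_gt_0_nat by blast
  have "p \<ge> 2" using assms(6) prime_ge_2_nat by blast
  then have oddp: "odd p" using assms(6,7) prime_odd_nat by simp
  have perm: "y permutes {1..n}" and yid: "y \<noteq> id" using assms(4) unfolding VV_def by auto
  have injy: "inj y" using perm permutes_inj by blast
  have yin: "\<And>w. w \<in> {1..n} \<Longrightarrow> y w \<in> {1..n}" using permutes_in_image[OF perm] by metis
  have yout: "\<And>w. w \<notin> {1..n} \<Longrightarrow> y w = w" using perm by (simp add: permutes_def)
  show ?thesis
  proof (cases "\<exists>a b. a \<in> {1..n} \<and> b \<in> {1..n} \<and> a \<noteq> b \<and> y a = a \<and> y b = b")
    case True
    then obtain a b where ab: "a \<in> {1..n}" "b \<in> {1..n}" "a \<noteq> b" "y a = a" "y b = b" by blast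
    have "conn n y (transpose a b)" by (rule conn_transp[OF assms(4,5) oddp ab])
    moreover have "transpose a b \<in> TT n" by (rule transp_TT[OF ab(1-3)])
    ultimately show ?thesis by blast
  next
    case False
    define Fx where "Fx = {w \<in> {1..n}. y w = w}"
    have finFx: "finite Fx" unfolding Fx_def by simp
    have cFx: "card Fx \<le> 1"
    proof (rule ccontr)
      assume "\<not> card Fx \<le> 1"
      then have c2: "card Fx \<ge> 2" by simp
      obtain a where a: "a \<in> Fx" using avoid_in[of "{}" Fx] finFx c2 by auto
      obtain b where b: "b \<in> Fx" "b \<notin> {a}" using avoid_in[of "{a}" Fx] finFx c2 by auto
      show False using False a b unfolding Fx_def by blast
    qed
    obtain x1 where x1w: "y x1 \<noteq> x1" using yid by (meson eq_id_iff)
    have x1: "x1 \<in> {1..n}" using yout x1w by blast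
    define O1 where "O1 = orb y p x1"
    have cO1: "card O1 = p" unfolding O1_def by (rule card_orb[OF assms(5,6) x1w])
    have yk_in: "\<And>k w. w \<in> {1..n} \<Longrightarrow> (y ^^ k) w \<in> {1..n}"
      using permutes_funpow'[OF perm] permutes_in_image by metis
    have O1sub: "O1 \<subseteq> {1..n}" unfolding O1_def orb_def using yk_in x1 by auto
    have "\<exists>x2\<in>{1..n}. y x2 \<noteq> x2 \<and> x2 \<notin> O1"
    proof (rule ccontr)
      assume "\<not> ?thesis"
      then have "{1..n} \<subseteq> O1 \<union> Fx" unfolding Fx_def by auto
      then have "card {1..n} \<le> card (O1 \<union> Fx)"
        by (rule card_mono[rotated]) (use O1sub finFx in \<open>simp add: finite_subset\<close>)
      also have "\<dots> \<le> card O1 + card Fx" by (rule card_Un_le)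
      finally have "n \<le> p + 1" using cO1 cFx by simp
      moreover have "p \<le> n" using card_mono[OF _ O1sub] cO1 by simp
      ultimately have "p = n \<or> p = n - 1" by arith
      then show False using assms(2,3,6) by auto
    qed
    then obtain x2 where x2: "x2 \<in> {1..n}" "y x2 \<noteq> x2" "x2 \<notin> O1" by blast
    define O2 where "O2 = orb y p x2"
    have O2sub: "O2 \<subseteq> {1..n}" unfolding O2_def orb_def using yk_in x2 by auto
    have x1O1: "x1 \<in> O1" unfolding O1_def using mem_orb[OF assms(5) p0, of 0] by simp
    have x2O2: "x2 \<in> O2" unfolding O2_def using mem_orb[OF assms(5) p0, of 0] by simp
    have disj: "w \<in> O2 \<Longrightarrow> w \<notin> O1" for w
    proof
      assume w2: "w \<in> O2" and w1: "w \<in> O1"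
      obtain j where j: "w = (y ^^ j) x2" "j < p" using w2 unfolding O2_def orb_def by auto
      have "(y ^^ (p - j)) w = (y ^^ (p - j + j)) x2" by (simp only: j(1) funpow_add comp_apply)
      also have "\<dots> = x2" using j assms(5) by simp
      finally have "x2 = (y ^^ (p - j)) w" by simp
      then have "x2 \<in> O1" using orb_closed[OF assms(5) p0, of w x1 "p - j"] w1 unfolding O1_def by simp
      then show False using x2 by simp
    qed
    define t where "t = (\<lambda>w. if w \<in> O1 then (y ^^ (SOME k. k < p \<and> (y ^^ k) x1 = w)) x2
      else if w \<in> O2 then (y ^^ (SOME k. k < p \<and> (y ^^ k) x2 = w)) x1 else w)"
    have T1: "t ((y ^^ i) x1) = (y ^^ i) x2" for i
    proof -
      have "(y ^^ i) x1 \<in> O1" unfolding O1_def by (rule mem_orb[OF assms(5) p0])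
      then have "t ((y ^^ i) x1) = (y ^^ (i mod p)) x2"
        unfolding t_def using sel_mod[OF assms(5,6) x1w, of i] by simp
      also have "\<dots> = (y ^^ i) x2" using funpow_mod_id[OF assms(5), of i] by simp
      finally show ?thesis .
    qed
    have T2: "t ((y ^^ i) x2) = (y ^^ i) x1" for i
    proof -
      have m: "(y ^^ i) x2 \<in> O2" unfolding O2_def by (rule mem_orb[OF assms(5) p0])
      then have "(y ^^ i) x2 \<notin> O1" using disj by blast
      then have "t ((y ^^ i) x2) = (y ^^ (i mod p)) x1"
        unfolding t_def using sel_mod[OF assms(5,6) x2(2), of i] m by simp
      also have "\<dots> = (y ^^ i) x1" using funpow_mod_id[OF assms(5), of i] by simp
      finally show ?thesis .
    qed
    have T3: "w \<notin> O1 \<Longrightarrow> w \<notin> O2 \<Longrightarrow> t w = w" for w unfolding t_def by simp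
    have O1E: "w \<in> O1 \<Longrightarrow> \<exists>i. w = (y ^^ i) x1" for w unfolding O1_def orb_def by auto
    have O2E: "w \<in> O2 \<Longrightarrow> \<exists>i. w = (y ^^ i) x2" for w unfolding O2_def orb_def by auto
    have comm: "t \<circ> y = y \<circ> t"
    proof
      fix w
      show "(t \<circ> y) w = (y \<circ> t) w"
      proof (cases "w \<in> O1")
        case True
        then obtain i where w: "w = (y ^^ i) x1" using O1E by blast
        have "y w = (y ^^ Suc i) x1" using w by simp
        then show ?thesis using T1[of i] T1[of "Suc i"] w by simp
      next
        case F1: False
        show ?thesis
        proof (cases "w \<in> O2")
          case True
          then obtain i where w: "w = (y ^^ i) x2" using O2E by blast
          have "y w = (y ^^ Suc i) x2" using w by simp
          then show ?thesis using T2[of i] T2[of "Suc i"] w by simp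
        next
          case F2: False
          have "y w \<notin> O1" using F1 orb_back[OF assms(5) p0, of w x1] unfolding O1_def by blast
          moreover have "y w \<notin> O2" using F2 orb_back[OF assms(5) p0, of w x2] unfolding O2_def by blast
          ultimately show ?thesis using T3 F1 F2 by simp
        qed
      qed
    qed
    have tt: "t (t w) = w" for w
    proof (cases "w \<in> O1")
      case True
      then obtain i where w: "w = (y ^^ i) x1" using O1E by blast
      then show ?thesis using T1 T2 by simp
    next
      case F1: False
      show ?thesis
      proof (cases "w \<in> O2")
        case True
        then obtain i where w: "w = (y ^^ i) x2" using O2E by blast
        then show ?thesis using T1 T2 by simp
      next
        case False
        then show ?thesis using T3 F1 by simp
      qed
    qed
    have t2: "t ^^ 2 = id" by (rule ext) (simp add: numeral_2_eq_2 tt)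
    have tperm: "t permutes {1..n}"
    proof (rule permutes_of_order[OF t2])
      fix w assume "w \<notin> {1..n}"
      then show "t w = w" using T3 O1sub O2sub by blast
    qed simp
    have "t x1 = x2" using T1[of 0] by simp
    then have "t \<noteq> id" using x1O1 x2(3) by auto
    then have tV: "t \<in> VV n" using tperm unfolding VV_def by auto
    have c1: "conn n y t"
      by (rule conn_coprime[OF assms(4) tV comm[symmetric] assms(5) t2]) (simp add: oddp)
    obtain tr where "tr \<in> TT n" "conn n t tr" using invol_TT[OF assms(1) tV t2] by blast
    then show ?thesis using c1 conn_trans by blast
  qed
qed


lemma prime5: "Factorial_Ring.prime (5::nat)"
proof -
  have e: "{2..<5::nat} = {2,3,4}" by auto
  show ?thesis unfolding prime_nat_iff' e by simp
qed
lemma prime7: "Factorial_Ring.prime (7::nat)"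
proof -
  have e: "{2..<7::nat} = {2,3,4,5,6}" by auto
  show ?thesis unfolding prime_nat_iff' e by simp
qed

lemma n_ge9:
  fixes n :: nat
  assumes "n \<ge> 6" "\<not> Factorial_Ring.prime n" "\<not> Factorial_Ring.prime (n - 1)"
  shows "n \<ge> 9"
proof -
  have "n \<noteq> 6" using assms(3) prime5 by auto
  moreover have "n \<noteq> 7" using assms(2) prime7 by auto
  moreover have "n \<noteq> 8" using assms(3) prime7 by auto
  ultimately show ?thesis using assms(1) by linarith
qed

lemma to_TT:
  assumes "n \<ge> 9" "\<not> Factorial_Ring.prime n" "\<not> Factorial_Ring.prime (n - 1)" "x \<in> VV n"
  shows "\<exists>t\<in>TT n. conn n x t"
proof -
  obtain p y where py: "Factorial_Ring.prime p" "y \<in> VV n" "y ^^ p = id" "conn n x y"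
    using prime_power[OF assms(4)] by blast
  obtain t where "t \<in> TT n" "conn n y t"
  proof (cases "p = 2")
    case True then show ?thesis using invol_TT[OF assms(1) py(2)] py(3) that by blast
  next
    case False then show ?thesis using oddp_TT[OF assms(1-3) py(2,3,1) False] that by blast
  qed
  then show ?thesis using py(4) conn_trans by blast
qed

lemma all_conn:
  assumes "n \<ge> 9" "\<not> Factorial_Ring.prime n" "\<not> Factorial_Ring.prime (n - 1)"
    "x \<in> VV n" "x' \<in> VV n"
  shows "conn n x x'"
proof -
  obtain t where t: "t \<in> TT n" "conn n x t" using to_TT[OF assms(1-4)] by blast
  obtain t' where t': "t' \<in> TT n" "conn n x' t'" using to_TT[OF assms(1-3,5)] by blast
  have "conn n t t'" by (rule transp_conn[OF assms(1) t(1) t'(1)])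
  then show ?thesis using t t' conn_sym conn_trans by blast
qed



lemma comm_pow:
  assumes "x \<circ> y = y \<circ> x"
  shows "x \<circ> y ^^ k = y ^^ k \<circ> x"
proof (induction k)
  case 0 then show ?case by simp
next
  case (Suc k)
  have "x \<circ> y ^^ Suc k = (x \<circ> y) \<circ> y ^^ k" by (simp add: o_assoc)
  also have "\<dots> = y \<circ> (x \<circ> y ^^ k)" using assms by (metis o_assoc)
  also have "\<dots> = y ^^ Suc k \<circ> x" using Suc by (simp only: funpow.simps(2) o_assoc)
  finally show ?case .
qed

definition scyc :: "nat \<Rightarrow> nat \<Rightarrow> nat" where
  "scyc m i = (if 1 \<le> i \<and> i < m then Suc i else if i = m then 1 else i)"

lemma scyc_pow1: "i < m \<Longrightarrow> (scyc m ^^ i) 1 = Suc i"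
  by (induction i) (auto simp: scyc_def)

lemma scyc_fix_pow: "scyc m w = w \<Longrightarrow> (scyc m ^^ k) w = w"
  by (induction k) auto

lemma scyc_out: "1 \<le> m \<Longrightarrow> w = 0 \<or> w > m \<Longrightarrow> scyc m w = w"
  by (auto simp: scyc_def)

lemma funpow_swap_apply: "(f ^^ a) ((f ^^ b) w) = (f ^^ b) ((f ^^ a) w)"
  by (metis add.commute comp_apply funpow_add)

lemma scyc_order:
  assumes "m \<ge> 2"
  shows "scyc m ^^ m = id"
proof
  fix w
  show "(scyc m ^^ m) w = id w"
  proof (cases "1 \<le> w \<and> w \<le> m")
    case True
    then have lt: "w - 1 < m" by arith
    have "(scyc m ^^ (w - 1)) 1 = Suc (w - 1)" by (rule scyc_pow1[OF lt])
    then have w: "w = (scyc m ^^ (w - 1)) 1" using True by simp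
    obtain q where q: "m = Suc q" using assms by (cases m) auto
    have "(scyc m ^^ m) 1 = scyc m ((scyc m ^^ q) 1)" unfolding q by simp
    also have "\<dots> = scyc m m" using scyc_pow1[of q m] q by simp
    also have "\<dots> = 1" by (simp add: scyc_def)
    finally have m1: "(scyc m ^^ m) 1 = 1" .
    have "(scyc m ^^ m) w = (scyc m ^^ (w - 1)) ((scyc m ^^ m) 1)"
      using w funpow_swap_apply by metis
    then show ?thesis using m1 w by simp
  next
    case False
    then have "scyc m w = w" using assms by (intro scyc_out) auto
    then show ?thesis using scyc_fix_pow by simp
  qed
qed

lemma scyc_perm:
  assumes "2 \<le> m" "m \<le> n"
  shows "scyc m permutes {1..n}"
proof (rule permutes_of_order[OF scyc_order[OF assms(1)]])
  fix w assume "w \<notin> {1..n}"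
  then show "scyc m w = w" using assms by (intro scyc_out) auto
qed (use assms in simp)

lemma scyc_cent:
  assumes "2 \<le> m" "m = n \<or> m = n - 1" "x permutes {1..n}" "x \<circ> scyc m = scyc m \<circ> x"
  shows "\<exists>k. x = scyc m ^^ k"
proof -
  let ?s = "scyc m"
  have mn: "m \<le> n" using assms(2) by auto
  have xin: "\<And>w. w \<in> {1..n} \<Longrightarrow> x w \<in> {1..n}" using permutes_in_image[OF assms(3)] by metis
  have xout: "\<And>w. w \<notin> {1..n} \<Longrightarrow> x w = w" using assms(3) by (simp add: permutes_def)
  have injx: "inj x" using assms(3) permutes_inj by blast
  have moved: "\<And>w. 1 \<le> w \<Longrightarrow> w \<le> m \<Longrightarrow> ?s w \<noteq> w" using assms(1) by (auto simp: scyc_def)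
  have xn: "m = n - 1 \<Longrightarrow> m \<noteq> n \<Longrightarrow> x n = n"
  proof -
    assume m: "m = n - 1" "m \<noteq> n"
    have "?s n = n" using m assms(1) by (intro scyc_out) auto
    then have "?s (x n) = x n" using fun_cong[OF assms(4), of n] by simp
    moreover have "x n \<in> {1..n}" using xin m assms(1) by auto
    ultimately show "x n = n"
    proof -
      assume a: "?s (x n) = x n" "x n \<in> {1..n}"
      show "x n = n"
      proof (rule ccontr)
        assume "x n \<noteq> n"
        then have "1 \<le> x n" "x n \<le> m" using a(2) m by auto
        then show False using moved a(1) by blast
      qed
    qed
  qed
  have x1: "1 \<le> x 1 \<and> x 1 \<le> m"
  proof (cases "m = n")
    case True then show ?thesis using xin[of 1] assms(1) by auto
  next
    case False
    then have m: "m = n - 1" using assms(2) by simp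
    have "1 \<noteq> n" using m assms(1) by simp
    then have "x 1 \<noteq> x n" using injx by (meson injD)
    then have "x 1 \<noteq> n" using xn[OF m False] by simp
    moreover have "x 1 \<in> {1..n}" using xin m assms(1) by auto
    ultimately show ?thesis using m by auto
  qed
  define k where "k = x 1 - 1"
  have klt: "k < m" using x1 unfolding k_def by arith
  have "(?s ^^ k) 1 = Suc k" by (rule scyc_pow1[OF klt])
  then have k: "(?s ^^ k) 1 = x 1" using x1 unfolding k_def by simp
  have "x = ?s ^^ k"
  proof
    fix w
    show "x w = (?s ^^ k) w"
    proof (cases "1 \<le> w \<and> w \<le> m")
      case True
      then have lt: "w - 1 < m" by arith
      have "(?s ^^ (w - 1)) 1 = Suc (w - 1)" by (rule scyc_pow1[OF lt])
      then have w: "w = (?s ^^ (w - 1)) 1" using True by simp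
      have "x w = (?s ^^ (w - 1)) (x 1)"
        using fun_cong[OF comm_pow[OF assms(4), of "w - 1"], of 1] w by simp
      also have "\<dots> = (?s ^^ k) w" using k w funpow_swap_apply by metis
      finally show ?thesis .
    next
      case False
      then have sw: "?s w = w" using assms(1) by (intro scyc_out) auto
      show ?thesis
      proof (cases "w \<in> {1..n}")
        case True
        then have "m \<noteq> n" "w = n" "m = n - 1" using False assms(2) by auto
        then show ?thesis using xn sw scyc_fix_pow by simp
      next
        case False
        then show ?thesis using xout sw scyc_fix_pow by simp
      qed
    qed
  qed
  then show ?thesis by blast
qed

lemma pow_sym:
  assumes "x \<in> carrier (sym_group n)"
  shows "x [^]\<^bsub>sym_group n\<^esub> (k::nat) = x ^^ k"
proof (induction k)
  case 0 then show ?case by (simp add: sym_group_one)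
next
  case (Suc k)
  have "x [^]\<^bsub>sym_group n\<^esub> Suc k = x ^^ k \<circ> x" using Suc by (simp add: sym_group_mult)
  also have "\<dots> = x ^^ Suc k" by (simp only: funpow_Suc_right)
  finally show ?case .
qed


theorem theorem5p25:
  fixes n :: nat and H :: "('c, 'd) monoid_scheme" and \<phi> :: "'c \<Rightarrow> (nat \<Rightarrow> nat)"
  assumes "n \<ge> 6"
    and "schur_cover H \<phi> (sym_group n)"
  shows "graph_connected_on (reduced_vertices H \<phi> (sym_group n)) (deep_adj H \<phi> (sym_group n))
           \<longleftrightarrow> \<not> Factorial_Ring.prime n \<and> \<not> Factorial_Ring.prime (n - 1)"
proof -
  let ?G = "sym_group n"
  have stem: "stem_extension H \<phi> ?G" using assms(2) unfolding schur_cover_def by blast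
  then have gH: "group H" and gG: "group ?G" and hom: "\<phi> \<in> hom H ?G"
    and surj: "\<phi> ` carrier H = carrier ?G"
    unfolding stem_extension_def by auto
  have carr: "\<And>x. x \<in> carrier ?G \<longleftrightarrow> x permutes {1..n}" by (rule sym_group_carrier)
  have pre: "\<And>x. x \<in> carrier ?G \<Longrightarrow> \<exists>a\<in>carrier H. \<phi> a = x" using surj by (metis imageE)
  have adj_comm: "x \<circ> y = y \<circ> x" if adjxy: "deep_adj H \<phi> ?G x y" for x y
  proof -
    obtain a b where ab: "a \<in> carrier H" "b \<in> carrier H" "\<phi> a = x" "\<phi> b = y"
      "a \<otimes>\<^bsub>H\<^esub> b = b \<otimes>\<^bsub>H\<^esub> a"
      using adjxy unfolding deep_adj_def by blast
    have "x \<circ> y = \<phi> (a \<otimes>\<^bsub>H\<^esub> b)" using hom_mult[OF hom ab(1,2)] ab(3,4) by (simp add: sym_group_mult)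
    also have "\<dots> = y \<circ> x" using hom_mult[OF hom ab(2,1)] ab(3,4,5) by (simp add: sym_group_mult)
    finally show ?thesis .
  qed
  have adj_pow: "deep_adj H \<phi> ?G x y \<and> deep_adj H \<phi> ?G y x"
    if th: "x \<in> carrier ?G" "y = x ^^ k" "x \<noteq> y" for x y k
  proof -
    obtain b where b: "b \<in> carrier H" "\<phi> b = x" using pre[OF th(1)] by blast
    have a: "b [^]\<^bsub>H\<^esub> k \<in> carrier H" using b(1) gH by (simp add: group.is_monoid monoid.nat_pow_closed)
    have "\<phi> (b [^]\<^bsub>H\<^esub> k) = x [^]\<^bsub>?G\<^esub> k" using hom_nat_pow[OF hom b(1) gH gG] b(2) by simp
    also have "\<dots> = y" using pow_sym[OF th(1)] th(2) by simp
    finally have pa: "\<phi> (b [^]\<^bsub>H\<^esub> k) = y" .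
    have cm: "b \<otimes>\<^bsub>H\<^esub> b [^]\<^bsub>H\<^esub> k = b [^]\<^bsub>H\<^esub> k \<otimes>\<^bsub>H\<^esub> b"
      using monoid.nat_pow_Suc2[OF group.is_monoid[OF gH] b(1), of k] by simp
    show ?thesis unfolding deep_adj_def using b a pa cm th(3) by metis
  qed
  have id_dom: "deep_dominant H \<phi> ?G id"
    unfolding deep_dominant_def
  proof (intro ballI impI)
    fix y assume y: "y \<in> carrier ?G" "y \<noteq> id"
    obtain b where b: "b \<in> carrier H" "\<phi> b = y" using pre[OF y(1)] by blast
    have "\<phi> \<one>\<^bsub>H\<^esub> = id" using hom_one[OF hom gH gG] by (simp add: sym_group_one)
    moreover have "\<one>\<^bsub>H\<^esub> \<otimes>\<^bsub>H\<^esub> b = b \<otimes>\<^bsub>H\<^esub> \<one>\<^bsub>H\<^esub>" using b(1) gH by (simp add: group.is_monoid monoid.l_one monoid.r_one)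
    moreover have "\<one>\<^bsub>H\<^esub> \<in> carrier H" using gH by (simp add: group.is_monoid monoid.one_closed)
    ultimately show "deep_adj H \<phi> ?G id y" unfolding deep_adj_def using b y(2) by metis
  qed
  have RV: "reduced_vertices H \<phi> ?G = VV n"
  proof (intro equalityI subsetI)
    fix x assume "x \<in> reduced_vertices H \<phi> ?G"
    then have "x \<in> carrier ?G" "\<not> deep_dominant H \<phi> ?G x" unfolding reduced_vertices_def by auto
    then show "x \<in> VV n" unfolding VV_def using id_dom carr by auto
  next
    fix x assume xV: "x \<in> VV n"
    then have xp: "x permutes {1..n}" and xid: "x \<noteq> id" unfolding VV_def by auto
    obtain a where a: "x a \<noteq> a" using xid by (meson eq_id_iff)
    have ain: "a \<in> {1..n}" using a xp by (meson permutes_not_in)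
    define b where "b = x a"
    have bin: "b \<in> {1..n}" using ain xp unfolding b_def by (meson permutes_in_image)
    obtain c where c: "c \<in> {1..n}" "c \<notin> {a, b}" using avoid[of "{a, b}" n] card2[of a b] assms(1) by auto
    define y where "y = transpose b c"
    have yc: "y \<in> carrier ?G" unfolding y_def carr using bin c by (simp add: permutes_swap_id)
    have e1: "(x \<circ> y) a = b" unfolding y_def b_def using c a by simp
    have e2: "(y \<circ> x) a = c" unfolding y_def b_def by simp
    have nc: "x \<circ> y \<noteq> y \<circ> x"
    proof
      assume "x \<circ> y = y \<circ> x"
      then have "b = c" using e1 e2 by metis
      then show False using c(2) by simp
    qed
    then have "y \<noteq> x" by auto
    then have "\<not> deep_dominant H \<phi> ?G x"
      unfolding deep_dominant_def using yc nc adj_comm by blast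
    then show "x \<in> reduced_vertices H \<phi> ?G" unfolding reduced_vertices_def using xp carr by auto
  qed
  let ?R = "{(a, b). a \<in> VV n \<and> b \<in> VV n \<and> deep_adj H \<phi> ?G a b}"
  show ?thesis
  proof
    assume conn: "graph_connected_on (reduced_vertices H \<phi> ?G) (deep_adj H \<phi> ?G)"
    then have connR: "\<And>u v. u \<in> VV n \<Longrightarrow> v \<in> VV n \<Longrightarrow> (u, v) \<in> ?R\<^sup>*"
      unfolding graph_connected_on_def RV by blast
    show "\<not> Factorial_Ring.prime n \<and> \<not> Factorial_Ring.prime (n - 1)"
    proof (rule ccontr)
      assume "\<not> ?thesis"
      then obtain m where m: "Factorial_Ring.prime m" "m = n \<or> m = n - 1" by blast
      have m3: "m \<ge> 3" using m(2) assms(1) by auto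
      have m2: "m \<ge> 2" using m3 by simp
      let ?s = "scyc m"
      have sperm: "?s permutes {1..n}" using scyc_perm[OF m2] m(2) by auto
      have s1: "?s 1 = 2" using m3 by (simp add: scyc_def)
      have sV: "?s \<in> VV n" using sperm s1 unfolding VV_def by (auto dest: fun_cong[where x = 1])
      have tV: "transpose 1 2 \<in> VV n" by (rule transpose_VV) (use assms(1) in auto)
      have path: "(?s, transpose 1 2) \<in> ?R\<^sup>*" by (rule connR[OF sV tV])
      have inv: "v \<circ> ?s = ?s \<circ> v" if "(?s, v) \<in> ?R\<^sup>*" for v
        using that
      proof (induction rule: rtrancl_induct)
        case base then show ?case by simp
      next
        case (step u v)
        then have uV: "u \<in> VV n" and vV: "v \<in> VV n" and adj: "deep_adj H \<phi> ?G u v" by auto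
        have up: "u permutes {1..n}" and uid: "u \<noteq> id" using uV unfolding VV_def by auto
        obtain k where k: "u = ?s ^^ k" using scyc_cent[OF m2 m(2) up step.IH] by blast
        have sm: "?s ^^ m = id" by (rule scyc_order[OF m2])
        have "\<not> m dvd k"
        proof
          assume "m dvd k"
          then have "?s ^^ k = id" by (rule funpow_id_dvd[OF sm])
          then show False using k uid by simp
        qed
        then have "coprime m k" using prime_imp_coprime[OF m(1)] by blast
        then have "coprime k m" by (simp add: coprime_commute)
        then obtain j where j: "(k * j) mod m = Suc 0 mod m" using solve_mod by blast
        have "u ^^ j = ?s ^^ (k * j)" using k by (simp add: funpow_mult)
        also have "\<dots> = ?s" by (rule funpow_cong1[OF sm j])
        finally have uj: "u ^^ j = ?s" .
        have "v \<circ> u = u \<circ> v" using adj_comm[OF adj] by simp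
        then have "v \<circ> u ^^ j = u ^^ j \<circ> v" by (rule comm_pow)
        then show ?case using uj by simp
      qed
      have "transpose 1 2 \<circ> ?s = ?s \<circ> transpose 1 2" by (rule inv[OF path])
      then have "(transpose 1 2 \<circ> ?s) 1 = (?s \<circ> transpose 1 2) 1" by simp
      moreover have "(transpose 1 2 \<circ> ?s) 1 = (1::nat)" using s1 by simp
      moreover have "(?s \<circ> transpose 1 2) 1 = 3" using m3 by (simp add: scyc_def)
      ultimately show False by simp
    qed
  next
    assume np: "\<not> Factorial_Ring.prime n \<and> \<not> Factorial_Ring.prime (n - 1)"
    have n9: "n \<ge> 9" using n_ge9[OF assms(1)] np by blast
    have sub: "RR n \<subseteq> ?R"
    proof
      fix e assume "e \<in> RR n"
      then obtain a b where e: "e = (a, b)" "a \<in> VV n" "b \<in> VV n" "pe a b" unfolding RR_def by blast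
      have ac: "a \<in> carrier ?G" "b \<in> carrier ?G" using e carr unfolding VV_def by auto
      obtain k where "a \<noteq> b" "b = a ^^ k \<or> a = b ^^ k" using e(4) unfolding pe_def by blast
      then have "deep_adj H \<phi> ?G a b" using adj_pow[OF ac(1), of b k] adj_pow[OF ac(2), of a k] by auto
      then show "e \<in> ?R" using e by simp
    qed
    show "graph_connected_on (reduced_vertices H \<phi> ?G) (deep_adj H \<phi> ?G)"
      unfolding graph_connected_on_def RV
    proof (intro ballI)
      fix u v assume "u \<in> VV n" "v \<in> VV n"
      then have "(u, v) \<in> (RR n)\<^sup>*" using all_conn[OF n9] np unfolding conn_def by blast
      then show "(u, v) \<in> ?R\<^sup>*" using rtrancl_mono[OF sub] by blast
    qed
  qed
qed

end
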